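(* Let $\operatorname{Pic}(\operatorname{Spec}\mathbf{Z})$ be the commutative monoid of isomorphism classes of torsion-free rank-1 abelian groups with product induced by $\otimes_{\mathbf{Z}}$ (equivalently, arithmetic divisors $\sum_p n_p[p]$, $n_p\in\mathbf{Z}\cup\{+\infty\}$, $n_p<0$ for finitely many $p$, modulo principal divisors, with addition). Let $\mathcal{P}$ be the set of all subsets $S$ of the set of rational primes, and define $\Theta:\mathcal{P}\to\operatorname{Pic}(\operatorname{Spec}\mathbf{Z})$ by $\Theta(S)=[\mathbf{Z}[1/p\mid p\in S]]$. Then the image of $\Theta$ is exactly the set of idempotent elements of $\operatorname{Pic}(\operatorname{Spec}\mathbf{Z})$. *)

theory Defs
  imports "HOL-Computational_Algebra.Computational_Algebra"
begin

datatype zinf = Fin int | PInf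

fun zinf_add :: "zinf \<Rightarrow> zinf \<Rightarrow> zinf" where
  "zinf_add (Fin a) (Fin b) = Fin (a + b)"
| "zinf_add _ _ = PInf"

fun zinf_neg :: "zinf \<Rightarrow> bool" where
  "zinf_neg (Fin a) = (a < 0)"
| "zinf_neg PInf = False"

text \<open>Arithmetic divisors on Spec Z: coefficients indexed by natural numbers,
  only primes carry information (non-primes are forced to coefficient 0);
  only finitely many coefficients are negative.\<close>
definition arith_divisor :: "(nat \<Rightarrow> zinf) \<Rightarrow> bool" where
  "arith_divisor D \<longleftrightarrow> (\<forall>p. \<not> prime p \<longrightarrow> D p = Fin 0) \<and> finite {p. zinf_neg (D p)}"

definition div_add :: "(nat \<Rightarrow> zinf) \<Rightarrow> (nat \<Rightarrow> zinf) \<Rightarrow> nat \<Rightarrow> zinf" where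
  "div_add D E = (\<lambda>p. zinf_add (D p) (E p))"

definition vp :: "nat \<Rightarrow> rat \<Rightarrow> int" where
  "vp p q = int (multiplicity (int p) (fst (quotient_of q)))
           - int (multiplicity (int p) (snd (quotient_of q)))"

definition principal_div :: "rat \<Rightarrow> nat \<Rightarrow> zinf" where
  "principal_div q = (\<lambda>p. if prime p then Fin (vp p q) else Fin 0)"

definition div_equiv :: "(nat \<Rightarrow> zinf) \<Rightarrow> (nat \<Rightarrow> zinf) \<Rightarrow> bool" where
  "div_equiv D E \<longleftrightarrow> arith_divisor D \<and> arith_divisor E \<and>
     (\<exists>q. q \<noteq> 0 \<and> E = div_add D (principal_div q))"

definition div_class :: "(nat \<Rightarrow> zinf) \<Rightarrow> (nat \<Rightarrow> zinf) set" where
  "div_class D = {E. div_equiv D E}"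

definition Pic :: "(nat \<Rightarrow> zinf) set set" where
  "Pic = {div_class D | D. arith_divisor D}"

definition Pic_add :: "(nat \<Rightarrow> zinf) set \<Rightarrow> (nat \<Rightarrow> zinf) set \<Rightarrow> (nat \<Rightarrow> zinf) set" where
  "Pic_add X Y = {F. \<exists>D\<in>X. \<exists>E\<in>Y. div_equiv (div_add D E) F}"

definition div_of_subgroup :: "rat set \<Rightarrow> nat \<Rightarrow> zinf" where
  "div_of_subgroup A = (\<lambda>p. if \<not> prime p then Fin 0
     else if bdd_above {- vp p a | a. a \<in> A \<and> a \<noteq> 0}
          then Fin (Sup {- vp p a | a. a \<in> A \<and> a \<noteq> 0}) else PInf)"

text \<open>Z[1/p | p in S] as a subring of Q.\<close>
definition Zloc :: "nat set \<Rightarrow> rat set" where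
  "Zloc S = {q. \<forall>p. prime p \<and> int p dvd snd (quotient_of q) \<longrightarrow> p \<in> S}"

definition Theta :: "nat set \<Rightarrow> (nat \<Rightarrow> zinf) set" where
  "Theta S = div_class (div_of_subgroup (Zloc S))"

end

theory Submission
  imports Defs
begin

lemma vp_Fract:
  assumes p: "prime p" and a: "a \<noteq> 0" and b: "b \<noteq> 0"
  shows "vp p (Rat.Fract a b) = int (multiplicity (int p) a) - int (multiplicity (int p) b)"
proof -
  obtain a' b' where q: "quotient_of (Rat.Fract a b) = (a', b')" by (cases "quotient_of (Rat.Fract a b)") auto
  have b': "b' > 0" using quotient_of_denom_pos[OF q] .
  have "Rat.Fract a' b' = Rat.Fract a b" using quotient_of_eq[OF q] .
  hence e: "a' * b = a * b'" using b b' by (simp add: eq_rat)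
  have a': "a' \<noteq> 0" using e a b b' by auto
  have pp: "prime_elem (int p)" using p by auto
  have "multiplicity (int p) (a' * b) = multiplicity (int p) (a * b')" using e by simp
  hence "multiplicity (int p) a' + multiplicity (int p) b = multiplicity (int p) a + multiplicity (int p) b'"
    using pp a b a' b' by (simp add: prime_elem_multiplicity_mult_distrib)
  thus ?thesis unfolding vp_def q by simp
qed

lemma vp_mult:
  assumes p: "prime p" and x: "x \<noteq> 0" and y: "y \<noteq> 0"
  shows "vp p (x * y) = vp p x + vp p y"
proof -
  obtain a b where xa: "x = Rat.Fract a b" and b: "b \<noteq> 0"
    by (metis Fract_quotient_of quotient_of_denom_pos' less_irrefl)
  obtain c d where yc: "y = Rat.Fract c d" and d: "d \<noteq> 0"
    by (metis Fract_quotient_of quotient_of_denom_pos' less_irrefl)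
  have a: "a \<noteq> 0" using x xa b by (auto simp: Fract_of_int_quotient)
  have c: "c \<noteq> 0" using y yc d by (auto simp: Fract_of_int_quotient)
  have pp: "prime_elem (int p)" using p by auto
  have "x * y = Rat.Fract (a*c) (b*d)" using xa yc by simp
  thus ?thesis using vp_Fract[OF p] a b c d xa yc pp
    by (simp add: prime_elem_multiplicity_mult_distrib)
qed

lemma vp_one: "vp p 1 = 0"
  unfolding vp_def by simp

lemma zinf_add_comm: "zinf_add x y = zinf_add y x"
  by (cases x; cases y) auto

lemma zinf_add_assoc: "zinf_add (zinf_add x y) z = zinf_add x (zinf_add y z)"
  by (cases x; cases y; cases z) auto

lemma zinf_add_0: "zinf_add x (Fin 0) = x"
  by (cases x) auto

lemma principal_mult:
  assumes "q \<noteq> 0" "r \<noteq> 0"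
  shows "principal_div (q * r) = div_add (principal_div q) (principal_div r)"
  using assms by (auto simp: principal_div_def div_add_def vp_mult)

lemma div_add_principal_mult:
  assumes "q \<noteq> 0" "r \<noteq> 0"
  shows "div_add (div_add D (principal_div q)) (principal_div r) = div_add D (principal_div (q * r))"
  using assms by (simp add: principal_mult div_add_def zinf_add_assoc)

lemma div_add_one: "div_add D (principal_div 1) = D"
  by (rule ext) (simp add: div_add_def principal_div_def vp_one zinf_add_0)

lemma arith_divisor_add:
  assumes "arith_divisor D" "arith_divisor E"
  shows "arith_divisor (div_add D E)"
proof -
  have "{p. zinf_neg (div_add D E p)} \<subseteq> {p. zinf_neg (D p)} \<union> {p. zinf_neg (E p)}"
  proof
    fix p assume "p \<in> {p. zinf_neg (div_add D E p)}"
    thus "p \<in> {p. zinf_neg (D p)} \<union> {p. zinf_neg (E p)}"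
      by (cases "D p"; cases "E p") (auto simp: div_add_def)
  qed
  thus ?thesis using assms unfolding arith_divisor_def
    by (auto simp: div_add_def intro: finite_subset)
qed

lemma div_equiv_refl: "arith_divisor D \<Longrightarrow> div_equiv D D"
  unfolding div_equiv_def by (rule conjI, assumption, rule conjI, assumption,
      rule exI[of _ 1]) (simp add: div_add_one)

lemma div_equiv_trans:
  assumes "div_equiv D E" "div_equiv E F" shows "div_equiv D F"
proof -
  obtain q where q: "q \<noteq> 0" "E = div_add D (principal_div q)" using assms(1) div_equiv_def by auto
  obtain r where r: "r \<noteq> 0" "F = div_add E (principal_div r)" using assms(2) div_equiv_def by auto
  show ?thesis using assms q r div_add_principal_mult[of q r D] unfolding div_equiv_def
    by (intro conjI exI[of _ "q*r"]) auto
qed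

lemma div_equiv_sym:
  assumes "div_equiv D E" shows "div_equiv E D"
proof -
  obtain q where q: "q \<noteq> 0" "E = div_add D (principal_div q)" using assms div_equiv_def by auto
  have "div_add E (principal_div (inverse q)) = div_add D (principal_div (q * inverse q))"
    using q div_add_principal_mult[of q "inverse q" D] by simp
  also have "\<dots> = D" using q by (simp add: div_add_one)
  finally show ?thesis using assms q unfolding div_equiv_def
    by (intro conjI exI[of _ "inverse q"]) auto
qed

lemma div_class_eq:
  assumes "div_equiv D E" shows "div_class D = div_class E"
  unfolding div_class_def using assms div_equiv_trans div_equiv_sym by blast

lemma Pic_add_class:
  assumes D: "arith_divisor D" and E: "arith_divisor E"
  shows "Pic_add (div_class D) (div_class E) = div_class (div_add D E)"
proof
  show "Pic_add (div_class D) (div_class E) \<subseteq> div_class (div_add D E)"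
  proof
    fix F assume "F \<in> Pic_add (div_class D) (div_class E)"
    then obtain D1 E1 where d1: "div_equiv D D1" and e1: "div_equiv E E1"
      and f: "div_equiv (div_add D1 E1) F"
      unfolding Pic_add_def div_class_def by auto
    obtain q where q: "q \<noteq> 0" "D1 = div_add D (principal_div q)" using d1 div_equiv_def by auto
    obtain r where r: "r \<noteq> 0" "E1 = div_add E (principal_div r)" using e1 div_equiv_def by auto
    have "div_add D1 E1 = div_add (div_add D E) (principal_div (q*r))"
    proof
      fix p
      show "div_add D1 E1 p = div_add (div_add D E) (principal_div (q*r)) p"
        using q r by (cases "D p"; cases "E p") (auto simp: vp_mult div_add_def principal_div_def)
    qed
    note eq = this
    have ad: "arith_divisor (div_add D1 E1)" using d1 e1 arith_divisor_add div_equiv_def by auto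
    have ad2: "arith_divisor (div_add D E)" using D E arith_divisor_add by auto
    have qr: "q * r \<noteq> 0" using q r by simp
    have "div_equiv (div_add D E) (div_add D1 E1)"
      unfolding div_equiv_def using ad ad2 qr eq by blast
    thus "F \<in> div_class (div_add D E)" using f div_equiv_trans unfolding div_class_def by blast
  qed
next
  show "div_class (div_add D E) \<subseteq> Pic_add (div_class D) (div_class E)"
    unfolding Pic_add_def div_class_def using D E div_equiv_refl by blast
qed

definition DS :: "nat set \<Rightarrow> nat \<Rightarrow> zinf" where
  "DS S = (\<lambda>p. if prime p \<and> p \<in> S then PInf else Fin 0)"

lemma DS_divisor: "arith_divisor (DS S)"
proof -
  have "{p. zinf_neg (DS S p)} = {}" by (auto simp: DS_def)
  thus ?thesis unfolding arith_divisor_def by (auto simp: DS_def)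
qed

lemma DS_double: "div_add (DS S) (DS S) = DS S"
  unfolding div_add_def DS_def by auto

lemma Zloc_DS:
  assumes "S \<subseteq> {p. prime p}"
  shows "div_of_subgroup (Zloc S) = DS S"
proof
  fix p
  show "div_of_subgroup (Zloc S) p = DS S p"
  proof (cases "prime p")
    case False thus ?thesis by (simp add: div_of_subgroup_def DS_def)
  next
    case p: True
    let ?A = "{- vp p a | a. a \<in> Zloc S \<and> a \<noteq> 0}"
    show ?thesis
    proof (cases "p \<in> S")
      case True
      have "\<not> bdd_above ?A"
      proof
        assume "bdd_above ?A"
        then obtain M where M: "\<And>x. x \<in> ?A \<Longrightarrow> x \<le> M" by (auto simp: bdd_above_def)
        define n where "n = nat M + 1"
        have pos: "(int p)^n > 0" using p prime_gt_0_nat by simp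
        have pp: "prime_elem (int p)" using p by auto
        have cop: "coprime 1 ((int p)^n)" by simp
        have qo: "quotient_of (Rat.Fract 1 ((int p)^n)) = (1, (int p)^n)"
          using pos cop by (simp add: quotient_of_Fract normalize_def)
        have inZ: "Rat.Fract 1 ((int p)^n) \<in> Zloc S"
          unfolding Zloc_def
        proof (clarsimp simp: qo)
          fix r :: nat assume r: "prime r" "int r dvd (int p)^n"
          hence "r dvd p ^ n" by (metis of_nat_dvd_iff of_nat_power)
          hence "r dvd p" using r(1) prime_dvd_power by blast
          hence "r = p" using r(1) p by (simp add: primes_dvd_imp_eq)
          thus "r \<in> S" using True by simp
        qed
        have nz: "Rat.Fract 1 ((int p)^n) \<noteq> 0" using pos by (simp add: Fract_of_int_quotient)
        have "vp p (Rat.Fract 1 ((int p)^n)) = - int n"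
          using vp_Fract[OF p, of 1 "(int p)^n"] pos pp by simp
        hence "int n \<in> ?A" using inZ nz by (metis (mono_tags, lifting) mem_Collect_eq minus_minus)
        hence "int n \<le> M" by (rule M)
        thus False unfolding n_def by (cases "M \<ge> 0") auto
      qed
      thus ?thesis using p True by (simp add: div_of_subgroup_def DS_def)
    next
      case False
      have le: "x \<le> 0" if xA: "x \<in> ?A" for x
      proof -
        obtain a where a: "a \<in> Zloc S" "x = - vp p a" using xA by blast
        have "\<not> int p dvd snd (quotient_of a)" using a(1) False p unfolding Zloc_def by auto
        hence "multiplicity (int p) (snd (quotient_of a)) = 0" by (rule not_dvd_imp_multiplicity_0)
        thus ?thesis using a(2) unfolding vp_def by simp
      qed
      have z: "0 \<in> ?A"
      proof -
        have "(1::rat) \<in> Zloc S" unfolding Zloc_def by simp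
        thus ?thesis using vp_one[of p] by (metis (mono_tags, lifting) mem_Collect_eq minus_zero one_neq_zero)
      qed
      have bdd: "bdd_above ?A" using le by (auto simp: bdd_above_def)
      have "Sup ?A = 0" using le z by (intro cSup_eq_maximum) auto
      thus ?thesis using bdd p False by (simp add: div_of_subgroup_def DS_def)
    qed
  qed
qed

theorem theorem2p16:
  shows "Theta ` {S. S \<subseteq> {p. prime p}} = {X \<in> Pic. Pic_add X X = X}"
proof
  show "Theta ` {S. S \<subseteq> {p. prime p}} \<subseteq> {X \<in> Pic. Pic_add X X = X}"
  proof
    fix X assume "X \<in> Theta ` {S. S \<subseteq> {p. prime p}}"
    then obtain S where S: "S \<subseteq> {p. prime p}" "X = div_class (DS S)"
      unfolding Theta_def using Zloc_DS by auto
    show "X \<in> {X \<in> Pic. Pic_add X X = X}"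
      using S DS_divisor[of S] Pic_add_class[OF DS_divisor DS_divisor, of S S] DS_double[of S]
      unfolding Pic_def by auto
  qed
next
  show "{X \<in> Pic. Pic_add X X = X} \<subseteq> Theta ` {S. S \<subseteq> {p. prime p}}"
  proof
    fix X assume "X \<in> {X \<in> Pic. Pic_add X X = X}"
    then obtain D where D: "arith_divisor D" "X = div_class D" and idem: "Pic_add X X = X"
      unfolding Pic_def by auto
    have "div_class (div_add D D) = div_class D" using idem D Pic_add_class by simp
    hence "D \<in> div_class (div_add D D)" using div_equiv_refl[OF D(1)] by (simp add: div_class_def)
    then obtain q where q: "q \<noteq> 0" "D = div_add (div_add D D) (principal_div q)"
      unfolding div_class_def div_equiv_def by auto
    define S where "S = {p. prime p \<and> D p = PInf}"
    have eq: "div_add D (principal_div q) = DS S"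
    proof
      fix p
      show "div_add D (principal_div q) p = DS S p"
      proof (cases "prime p")
        case False
        thus ?thesis using D(1) unfolding arith_divisor_def div_add_def principal_div_def DS_def S_def
          by simp
      next
        case True
        have "D p = zinf_add (zinf_add (D p) (D p)) (Fin (vp p q))"
          using fun_cong[OF q(2), of p] True by (simp add: div_add_def principal_div_def)
        thus ?thesis using True unfolding div_add_def principal_div_def DS_def S_def
          by (cases "D p") auto
      qed
    qed
    have "div_equiv D (DS S)" using D(1) DS_divisor q(1) eq unfolding div_equiv_def by metis
    hence "X = div_class (DS S)" using D(2) div_class_eq by simp
    moreover have "S \<subseteq> {p. prime p}" unfolding S_def by auto
    ultimately show "X \<in> Theta ` {S. S \<subseteq> {p. prime p}}"
      unfolding Theta_def using Zloc_DS by auto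
  qed
qed

end
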